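(* Let $R$ be a commutative ring, $M$ an $R$-module and $c$ a closure operation of finite type on $\mathrm{SMod}(M|R)$. Then $\mathrm{SMod}^c(M|R):=\{N\in\mathrm{SMod}(M|R)\mid N=N^c\}$, with the topology induced by the hull-kernel topology, is a spectral space; moreover, $\mathrm{SMod}^c(M|R)$ is closed in $\mathrm{SMod}(M|R)$ endowed with the constructible topology.
   Context: $\mathrm{SMod}(M|R)$ is the set of $R$-submodules of $M$; its hull-kernel topology has as subbasis of closed sets the sets $\boldsymbol V(x_1,\dots,x_m):=\{N\mid x_1,\dots,x_m\in N\}$ for finite $\{x_1,\dots,x_m\}\subseteq M$; with it, $\mathrm{SMod}(M|R)$ is spectral. A closure operation on $\mathrm{SMod}(M|R)$ is a map $N\mapsto N^c$ that is extensive ($N\subseteq N^c$), order-preserving and idempotent; it is of finite type if $N^c=\bigcup\{L^c\mid L\subseteq N,\ L \text{ finitely generated submodule}\}$ for all $N$. The constructible topology on a spectral space $X$ is the coarsest topology for which all quasi-compact open subsets of $X$ are clopen. *)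

theory Defs
  imports "HOL-Analysis.Analysis" "HOL-Algebra.Module"
begin

definition SMod :: "('a, 'c) ring_scheme \<Rightarrow> ('a, 'b, 'd) module_scheme \<Rightarrow> 'b set set" where
  "SMod R M = {N. submodule N R M}"

definition V_sub :: "('a, 'c) ring_scheme \<Rightarrow> ('a, 'b, 'd) module_scheme \<Rightarrow> 'b set \<Rightarrow> 'b set set" where
  "V_sub R M F = {N \<in> SMod R M. F \<subseteq> N}"

text \<open>Hull-kernel topology: the sets V(F), F finite, form a subbasis of closed sets, so their
  complements (together with the whole space) form a subbasis of open sets.\<close>
definition hull_kernel_topology :: "('a, 'c) ring_scheme \<Rightarrow> ('a, 'b, 'd) module_scheme \<Rightarrow> 'b set topology" where
  "hull_kernel_topology R M =
     topology_generated_by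
       (insert (SMod R M) {SMod R M - V_sub R M F | F. finite F \<and> F \<subseteq> carrier M})"

definition gen_submodule :: "('a, 'c) ring_scheme \<Rightarrow> ('a, 'b, 'd) module_scheme \<Rightarrow> 'b set \<Rightarrow> 'b set" where
  "gen_submodule R M F = \<Inter> {N \<in> SMod R M. F \<subseteq> N}"

definition fin_gen_submodule :: "('a, 'c) ring_scheme \<Rightarrow> ('a, 'b, 'd) module_scheme \<Rightarrow> 'b set \<Rightarrow> bool" where
  "fin_gen_submodule R M L \<longleftrightarrow> (\<exists>F. finite F \<and> F \<subseteq> carrier M \<and> L = gen_submodule R M F)"

definition closure_operation ::
  "('a, 'c) ring_scheme \<Rightarrow> ('a, 'b, 'd) module_scheme \<Rightarrow> ('b set \<Rightarrow> 'b set) \<Rightarrow> bool" where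
  "closure_operation R M c \<longleftrightarrow>
     (\<forall>N \<in> SMod R M. c N \<in> SMod R M) \<and>
     (\<forall>N \<in> SMod R M. N \<subseteq> c N) \<and>
     (\<forall>N \<in> SMod R M. \<forall>N' \<in> SMod R M. N \<subseteq> N' \<longrightarrow> c N \<subseteq> c N') \<and>
     (\<forall>N \<in> SMod R M. c (c N) = c N)"

definition finite_type ::
  "('a, 'c) ring_scheme \<Rightarrow> ('a, 'b, 'd) module_scheme \<Rightarrow> ('b set \<Rightarrow> 'b set) \<Rightarrow> bool" where
  "finite_type R M c \<longleftrightarrow>
     (\<forall>N \<in> SMod R M. c N = \<Union> {c L | L. L \<subseteq> N \<and> fin_gen_submodule R M L})"

definition closed_SMod ::
  "('a, 'c) ring_scheme \<Rightarrow> ('a, 'b, 'd) module_scheme \<Rightarrow> ('b set \<Rightarrow> 'b set) \<Rightarrow> 'b set set" where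
  "closed_SMod R M c = {N \<in> SMod R M. N = c N}"

definition irreducible_in :: "'a topology \<Rightarrow> 'a set \<Rightarrow> bool" where
  "irreducible_in X Z \<longleftrightarrow> Z \<subseteq> topspace X \<and> Z \<noteq> {} \<and>
     (\<forall>C1 C2. closedin X C1 \<and> closedin X C2 \<and> Z \<subseteq> C1 \<union> C2 \<longrightarrow> Z \<subseteq> C1 \<or> Z \<subseteq> C2)"

definition spectral_space :: "'a topology \<Rightarrow> bool" where
  "spectral_space X \<longleftrightarrow>
     compact_space X \<and> t0_space X \<and>
     (\<forall>U V. openin X U \<and> compactin X U \<and> openin X V \<and> compactin X V \<longrightarrow> compactin X (U \<inter> V)) \<and>
     (\<forall>W x. openin X W \<and> x \<in> W \<longrightarrow> (\<exists>U. openin X U \<and> compactin X U \<and> x \<in> U \<and> U \<subseteq> W)) \<and>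
     (\<forall>Z. closedin X Z \<and> irreducible_in X Z \<longrightarrow> (\<exists>x \<in> Z. Z = X closure_of {x}))"

text \<open>Constructible topology: the coarsest topology on the same carrier in which all
  quasi-compact open sets are clopen.\<close>
definition constructible_topology :: "'a topology \<Rightarrow> 'a topology" where
  "constructible_topology X =
     topology_generated_by
       ({U. openin X U \<and> compactin X U} \<union> {topspace X - U | U. openin X U \<and> compactin X U})"

end

theory Submission
  imports Defs
begin

definition DD :: "'b set \<Rightarrow> 'b set set" where
  "DD G = {N. G \<inter> N = {}}"

lemma SMod_subset: "module R M \<Longrightarrow> N \<in> SMod R M \<Longrightarrow> N \<subseteq> carrier M"
  unfolding SMod_def using module.submoduleE(1) by blast

lemma SMod_carrier: "module R M \<Longrightarrow> carrier M \<in> SMod R M"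
  unfolding SMod_def using module.carrier_is_submodule by blast

lemma SMod_Inter:
  assumes m: "module R M" and Z: "Z \<subseteq> SMod R M" "Z \<noteq> {}"
  shows "\<Inter>Z \<in> SMod R M"
proof -
  have sm: "\<And>N. N \<in> Z \<Longrightarrow> submodule N R M" using Z unfolding SMod_def by auto
  obtain N0 where N0: "N0 \<in> Z" using Z by auto
  have "submodule (\<Inter>Z) R M"
  proof (rule module.submoduleI[OF m])
    show "\<Inter>Z \<subseteq> carrier M" using N0 module.submoduleE(1)[OF m sm[OF N0]] by auto
    show "\<zero>\<^bsub>M\<^esub> \<in> \<Inter>Z"
    proof
      fix N assume "N \<in> Z"
      then have s: "submodule N R M" by (rule sm)
      then obtain a where "a \<in> N" using module.submoduleE(2)[OF m] by blast
      then have "a \<ominus>\<^bsub>M\<^esub> a \<in> N" "a \<in> carrier M"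
        using module.submoduleE[OF m s] by (auto simp: a_minus_def)
      moreover have "a \<ominus>\<^bsub>M\<^esub> a = \<zero>\<^bsub>M\<^esub>" using \<open>a \<in> carrier M\<close> m
        by (metis abelian_group.r_neg module.axioms(2) a_minus_def)
      ultimately show "\<zero>\<^bsub>M\<^esub> \<in> N" by simp
    qed
    show "\<And>a. a \<in> \<Inter>Z \<Longrightarrow> \<ominus>\<^bsub>M\<^esub> a \<in> \<Inter>Z"
      using module.submoduleE(3)[OF m sm] by blast
    show "\<And>a b. a \<in> \<Inter>Z \<Longrightarrow> b \<in> \<Inter>Z \<Longrightarrow> a \<oplus>\<^bsub>M\<^esub> b \<in> \<Inter>Z"
      using module.submoduleE(5)[OF m sm] by blast
    show "\<And>a x. a \<in> carrier R \<Longrightarrow> x \<in> \<Inter>Z \<Longrightarrow> a \<odot>\<^bsub>M\<^esub> x \<in> \<Inter>Z"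
      using module.submoduleE(4)[OF m sm] by blast
  qed
  then show ?thesis unfolding SMod_def by simp
qed

lemma gen_SMod: "module R M \<Longrightarrow> F \<subseteq> carrier M \<Longrightarrow> gen_submodule R M F \<in> SMod R M"
  unfolding gen_submodule_def
  by (rule SMod_Inter) (auto dest: SMod_carrier)

lemma SMod_zero: assumes m: "module R M" and N: "N \<in> SMod R M" shows "\<zero>\<^bsub>M\<^esub> \<in> N"
proof -
  have s: "submodule N R M" using N unfolding SMod_def by simp
  then obtain a where "a \<in> N" using module.submoduleE(2)[OF m] by blast
  then have "a \<ominus>\<^bsub>M\<^esub> a \<in> N" "a \<in> carrier M"
    using module.submoduleE[OF m s] by (auto simp: a_minus_def)
  moreover have "a \<ominus>\<^bsub>M\<^esub> a = \<zero>\<^bsub>M\<^esub>" using \<open>a \<in> carrier M\<close> m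
    by (metis abelian_group.r_neg module.axioms(2) a_minus_def)
  ultimately show ?thesis by simp
qed

lemma gen_sup: "F \<subseteq> gen_submodule R M F"
  unfolding gen_submodule_def by auto

lemma gen_least: "N \<in> SMod R M \<Longrightarrow> F \<subseteq> N \<Longrightarrow> gen_submodule R M F \<subseteq> N"
  unfolding gen_submodule_def by auto

lemma gen_mono: "F \<subseteq> G \<Longrightarrow> gen_submodule R M F \<subseteq> gen_submodule R M G"
  unfolding gen_submodule_def by auto

lemma fin_approx:
  assumes m: "module R M" and A: "A \<subseteq> carrier M" and E: "finite E" "E \<subseteq> gen_submodule R M A"
  shows "\<exists>A'. finite A' \<and> A' \<subseteq> A \<and> E \<subseteq> gen_submodule R M A'"
proof -
  define U where "U = {x. \<exists>A0. finite A0 \<and> A0 \<subseteq> A \<and> x \<in> gen_submodule R M A0}"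
  have gS: "\<And>A0. A0 \<subseteq> A \<Longrightarrow> gen_submodule R M A0 \<in> SMod R M"
    using gen_SMod[OF m] A by blast
  have sm: "\<And>A0. A0 \<subseteq> A \<Longrightarrow> submodule (gen_submodule R M A0) R M"
    using gS by (simp add: SMod_def)
  have "submodule U R M"
  proof (rule module.submoduleI[OF m])
    show "U \<subseteq> carrier M"
    proof
      fix x assume "x \<in> U"
      then obtain A0 where "A0 \<subseteq> A" "x \<in> gen_submodule R M A0" unfolding U_def by blast
      then show "x \<in> carrier M" using SMod_subset[OF m gS[OF \<open>A0 \<subseteq> A\<close>]] by blast
    qed
    have "\<zero>\<^bsub>M\<^esub> \<in> gen_submodule R M {}" using SMod_zero[OF m gS[of "{}"]] by simp
    then show "\<zero>\<^bsub>M\<^esub> \<in> U" unfolding U_def by (intro CollectI exI[of _ "{}"]) simp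
    show "\<ominus>\<^bsub>M\<^esub> a \<in> U" if aU: "a \<in> U" for a
    proof -
      obtain A1 where A1: "finite A1" "A1 \<subseteq> A" "a \<in> gen_submodule R M A1"
        using aU unfolding U_def by blast
      have "\<ominus>\<^bsub>M\<^esub> a \<in> gen_submodule R M A1"
        using module.submoduleE(3)[OF m sm[OF A1(2)] A1(3)] .
      with A1 show ?thesis unfolding U_def by blast
    qed
    show "r \<odot>\<^bsub>M\<^esub> a \<in> U" if rU: "r \<in> carrier R" "a \<in> U" for r a
    proof -
      obtain A1 where A1: "finite A1" "A1 \<subseteq> A" "a \<in> gen_submodule R M A1"
        using rU(2) unfolding U_def by blast
      have "r \<odot>\<^bsub>M\<^esub> a \<in> gen_submodule R M A1"
        using module.submoduleE(4)[OF m sm[OF A1(2)] rU(1) A1(3)] .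
      with A1 show ?thesis unfolding U_def by blast
    qed
    show "a \<oplus>\<^bsub>M\<^esub> b \<in> U" if abU: "a \<in> U" "b \<in> U" for a b
    proof -
      obtain A1 where A1: "finite A1" "A1 \<subseteq> A" "a \<in> gen_submodule R M A1"
        using abU(1) unfolding U_def by blast
      obtain A2 where A2: "finite A2" "A2 \<subseteq> A" "b \<in> gen_submodule R M A2"
        using abU(2) unfolding U_def by blast
      have ab: "a \<in> gen_submodule R M (A1 \<union> A2)" "b \<in> gen_submodule R M (A1 \<union> A2)"
        using gen_mono[of A1 "A1 \<union> A2" R M] gen_mono[of A2 "A1 \<union> A2" R M] A1(3) A2(3) by auto
      have sub: "A1 \<union> A2 \<subseteq> A" using A1(2) A2(2) by simp
      have "a \<oplus>\<^bsub>M\<^esub> b \<in> gen_submodule R M (A1 \<union> A2)"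
        using module.submoduleE(5)[OF m sm[OF sub] ab] .
      moreover have "finite (A1 \<union> A2)" using A1(1) A2(1) by simp
      ultimately show ?thesis unfolding U_def using sub by blast
    qed
  qed
  moreover have "A \<subseteq> U"
  proof
    fix x assume "x \<in> A"
    then show "x \<in> U" unfolding U_def using gen_sup[of "{x}" R M] by (intro CollectI exI[of _ "{x}"]) auto
  qed
  ultimately have "gen_submodule R M A \<subseteq> U" using gen_least[of U R M A] by (simp add: SMod_def)
  with E(2) have EU: "E \<subseteq> U" by (rule order_trans)
  from E(1) EU show ?thesis
  proof (induction E rule: finite_induct)
    case empty
    show ?case by (intro exI[of _ "{}"]) simp
  next
    case (insert x E)
    then obtain A' where A': "finite A'" "A' \<subseteq> A" "E \<subseteq> gen_submodule R M A'" by blast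
    obtain A0 where A0: "finite A0" "A0 \<subseteq> A" "x \<in> gen_submodule R M A0"
      using insert.prems unfolding U_def by blast
    have "E \<subseteq> gen_submodule R M (A' \<union> A0)" using A'(3) gen_mono[of A' "A' \<union> A0" R M] by blast
    moreover have "x \<in> gen_submodule R M (A' \<union> A0)" using A0(3) gen_mono[of A0 "A' \<union> A0" R M] by blast
    ultimately show ?case using A' A0 by (intro exI[of _ "A' \<union> A0"]) simp
  qed
qed

lemma co_1: "closure_operation R M c \<Longrightarrow> N \<in> SMod R M \<Longrightarrow> c N \<in> SMod R M"
  unfolding closure_operation_def by (elim conjE) (rule bspec)
lemma co_2: "closure_operation R M c \<Longrightarrow> N \<in> SMod R M \<Longrightarrow> N \<subseteq> c N"
  unfolding closure_operation_def by (elim conjE) (rule bspec)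
lemma co_3: "closure_operation R M c \<Longrightarrow> N \<in> SMod R M \<Longrightarrow> N' \<in> SMod R M \<Longrightarrow> N \<subseteq> N' \<Longrightarrow> c N \<subseteq> c N'"
  unfolding closure_operation_def by (elim conjE) blast
lemma co_4: "closure_operation R M c \<Longrightarrow> N \<in> SMod R M \<Longrightarrow> c (c N) = c N"
  unfolding closure_operation_def by (elim conjE) (rule bspec)
lemma ft_1: "finite_type R M c \<Longrightarrow> N \<in> SMod R M \<Longrightarrow>
   c N = \<Union> {c L | L. L \<subseteq> N \<and> fin_gen_submodule R M L}"
  unfolding finite_type_def by (rule bspec)

lemma KEY:
  assumes m: "module R M" and co: "closure_operation R M c" and ft: "finite_type R M c"
    and A: "A \<subseteq> carrier M"
    and H: "\<And>A0. finite A0 \<Longrightarrow> A0 \<subseteq> A \<Longrightarrow> (\<exists>N\<in>closed_SMod R M c. G \<inter> N = {} \<and> A0 \<subseteq> N)"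
  shows "\<exists>N\<in>closed_SMod R M c. G \<inter> N = {} \<and> A \<subseteq> N"
proof -
  note c1 = co_1[OF co] and c2 = co_2[OF co] and c3 = co_3[OF co] and c4 = co_4[OF co]
  define L where "L = gen_submodule R M A"
  have L: "L \<in> SMod R M" unfolding L_def using gen_SMod[OF m A] .
  have NX: "c L \<in> closed_SMod R M c" unfolding closed_SMod_def using c1[OF L] c4[OF L] by simp
  have AN: "A \<subseteq> c L" using gen_sup[of A R M] c2[OF L] unfolding L_def by blast
  have "G \<inter> c L = {}"
  proof (rule ccontr)
    assume "G \<inter> c L \<noteq> {}"
    then obtain g where g: "g \<in> G" "g \<in> c L" by blast
    have "g \<in> \<Union> {c L' | L'. L' \<subseteq> L \<and> fin_gen_submodule R M L'}"
      using g(2) ft_1[OF ft L] by simp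
    then obtain L' where L': "g \<in> c L'" "L' \<subseteq> L" "fin_gen_submodule R M L'"
      by blast
    then obtain E where E: "finite E" "E \<subseteq> carrier M" "L' = gen_submodule R M E"
      unfolding fin_gen_submodule_def by blast
    have "E \<subseteq> L" using gen_sup[of E R M] E L' by blast
    then obtain A' where A': "finite A'" "A' \<subseteq> A" "E \<subseteq> gen_submodule R M A'"
      using fin_approx[OF m A E(1)] unfolding L_def by blast
    obtain N where N: "N \<in> closed_SMod R M c" "G \<inter> N = {}" "A' \<subseteq> N" using H[OF A'(1,2)] by blast
    have NS: "N \<in> SMod R M" "c N = N" using N(1) unfolding closed_SMod_def by auto
    have "gen_submodule R M A' \<subseteq> N" using gen_least[OF NS(1) N(3)] .
    then have "L' \<subseteq> N" using gen_least[OF NS(1), of E] A'(3) E(3) by blast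
    moreover have "L' \<in> SMod R M" using gen_SMod[OF m E(2)] E(3) by simp
    ultimately have "c L' \<subseteq> N" using c3[OF _ NS(1)] NS(2) by metis
    then show False using g L'(1) N(2) by blast
  qed
  then show ?thesis using NX AN by blast
qed
lemma topspace_H: "topspace (hull_kernel_topology R M) = SMod R M"
  unfolding hull_kernel_topology_def topology_generated_by_topspace by (auto simp: V_sub_def)

lemma DD_empty[simp]: "DD {} = UNIV" unfolding DD_def by auto

lemma DD_insert: "DD (insert x G) = DD {x} \<inter> DD G" unfolding DD_def by auto

lemma DD_Un: "DD (G1 \<union> G2) = DD G1 \<inter> DD G2" unfolding DD_def by auto

lemma mem_DD: "N \<in> DD G \<longleftrightarrow> G \<inter> N = {}" unfolding DD_def by auto

lemma DD_open:
  assumes "finite G" "G \<subseteq> carrier M"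
  shows "openin (hull_kernel_topology R M) (DD G \<inter> SMod R M)"
  using assms
proof (induction G rule: finite_induct)
  case empty
  then show ?case unfolding hull_kernel_topology_def
    by (auto intro: topology_generated_by_Basis)
next
  case (insert x G)
  have "SMod R M - V_sub R M {x} \<in>
    insert (SMod R M) {SMod R M - V_sub R M F | F. finite F \<and> F \<subseteq> carrier M}"
    using insert.prems by blast
  then have o1: "openin (hull_kernel_topology R M) (SMod R M - V_sub R M {x})"
    unfolding hull_kernel_topology_def by (rule topology_generated_by_Basis)
  have eq: "DD (insert x G) \<inter> SMod R M = (SMod R M - V_sub R M {x}) \<inter> (DD G \<inter> SMod R M)"
    unfolding DD_def V_sub_def by auto
  have "G \<subseteq> carrier M" using insert.prems by simp
  then show ?case unfolding eq using openin_Int[OF o1 insert.IH] by simp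
qed

lemma open_char:
  assumes X: "X \<subseteq> SMod R M"
  shows "openin (subtopology (hull_kernel_topology R M) X) W \<longleftrightarrow>
    W \<subseteq> X \<and> (\<forall>N\<in>W. \<exists>G. finite G \<and> G \<subseteq> carrier M \<and> N \<in> DD G \<and> DD G \<inter> X \<subseteq> W)"
proof
  assume "openin (subtopology (hull_kernel_topology R M) X) W"
  then obtain T where T: "openin (hull_kernel_topology R M) T" "W = T \<inter> X"
    by (auto simp: openin_subtopology)
  have "generate_topology_on
      (insert (SMod R M) {SMod R M - V_sub R M F | F. finite F \<and> F \<subseteq> carrier M}) T"
    using T(1) unfolding hull_kernel_topology_def by (simp add: openin_topology_generated_by_iff)
  then have P: "\<forall>N\<in>T. N \<in> SMod R M \<and>
      (\<exists>G. finite G \<and> G \<subseteq> carrier M \<and> N \<in> DD G \<and> DD G \<inter> SMod R M \<subseteq> T)"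
  proof induction
    case Empty
    then show ?case by simp
  next
    case (Int a b)
    show ?case
    proof
      fix N assume N: "N \<in> a \<inter> b"
      have Na: "N \<in> a" "N \<in> b" using N by auto
      obtain G1 where G1: "finite G1" "G1 \<subseteq> carrier M" "N \<in> DD G1" "DD G1 \<inter> SMod R M \<subseteq> a"
        using Int.IH(1) Na(1) by blast
      obtain G2 where G2: "finite G2" "G2 \<subseteq> carrier M" "N \<in> DD G2" "DD G2 \<inter> SMod R M \<subseteq> b"
        using Int.IH(2) Na(2) by blast
      note G = G1 G2
      show "N \<in> SMod R M \<and>
        (\<exists>G. finite G \<and> G \<subseteq> carrier M \<and> N \<in> DD G \<and> DD G \<inter> SMod R M \<subseteq> a \<inter> b)"
        using N Int.IH G by (intro conjI exI[of _ "G1 \<union> G2"]) (auto simp: DD_Un)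
    qed
  next
    case (UN K)
    show ?case
    proof
      fix N assume "N \<in> \<Union>K"
      then obtain k where k: "k \<in> K" "N \<in> k" by blast
      then have "N \<in> SMod R M \<and> (\<exists>G. finite G \<and> G \<subseteq> carrier M \<and> N \<in> DD G \<and> DD G \<inter> SMod R M \<subseteq> k)"
        using UN.IH by blast
      then show "N \<in> SMod R M \<and> (\<exists>G. finite G \<and> G \<subseteq> carrier M \<and> N \<in> DD G \<and> DD G \<inter> SMod R M \<subseteq> \<Union>K)"
        using k by blast
    qed
  next
    case (Basis s)
    show ?case
    proof
      fix N assume N: "N \<in> s"
      show "N \<in> SMod R M \<and> (\<exists>G. finite G \<and> G \<subseteq> carrier M \<and> N \<in> DD G \<and> DD G \<inter> SMod R M \<subseteq> s)"
      proof (cases "s = SMod R M")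
        case True
        then show ?thesis using N by (intro conjI exI[of _ "{}"]) auto
      next
        case False
        then obtain F where F: "finite F" "F \<subseteq> carrier M" "s = SMod R M - V_sub R M F"
          using Basis by blast
        then obtain x where x: "x \<in> F" "x \<notin> N" using N unfolding V_sub_def by blast
        show ?thesis using N F x
          by (intro conjI exI[of _ "{x}"]) (auto simp: V_sub_def DD_def)
      qed
    qed
  qed
  show "W \<subseteq> X \<and> (\<forall>N\<in>W. \<exists>G. finite G \<and> G \<subseteq> carrier M \<and> N \<in> DD G \<and> DD G \<inter> X \<subseteq> W)"
  proof
    show "W \<subseteq> X" using T by blast
    show "\<forall>N\<in>W. \<exists>G. finite G \<and> G \<subseteq> carrier M \<and> N \<in> DD G \<and> DD G \<inter> X \<subseteq> W"
    proof
      fix N assume "N \<in> W"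
      then obtain G where G: "finite G" "G \<subseteq> carrier M" "N \<in> DD G" "DD G \<inter> SMod R M \<subseteq> T"
        using P T by blast
      then show "\<exists>G. finite G \<and> G \<subseteq> carrier M \<and> N \<in> DD G \<and> DD G \<inter> X \<subseteq> W"
        using X T(2) by (intro exI[of _ G]) blast
    qed
  qed
next
  assume R: "W \<subseteq> X \<and> (\<forall>N\<in>W. \<exists>G. finite G \<and> G \<subseteq> carrier M \<and> N \<in> DD G \<and> DD G \<inter> X \<subseteq> W)"
  show "openin (subtopology (hull_kernel_topology R M) X) W"
  proof (subst openin_subopen, intro ballI)
    fix N assume "N \<in> W"
    then obtain G where G: "finite G" "G \<subseteq> carrier M" "N \<in> DD G" "DD G \<inter> X \<subseteq> W"
      using R by blast
    have "openin (subtopology (hull_kernel_topology R M) X) ((DD G \<inter> SMod R M) \<inter> X)"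
      using DD_open[OF G(1,2)] by (rule openin_subtopology_Int)
    moreover have "(DD G \<inter> SMod R M) \<inter> X = DD G \<inter> X" using X by blast
    ultimately show "\<exists>T. openin (subtopology (hull_kernel_topology R M) X) T \<and> N \<in> T \<and> T \<subseteq> W"
      using G R \<open>N \<in> W\<close> by (intro exI[of _ "DD G \<inter> X"]) auto
  qed
qed

lemma Inter_DD_fin:
  assumes "finite \<F>" "\<F> \<subseteq> insert UNIV ((\<lambda>x. DD {x}) ` carrier M)"
  shows "\<exists>A. finite A \<and> A \<subseteq> carrier M \<and> \<Inter>\<F> = DD A"
  using assms
proof (induction \<F> rule: finite_induct)
  case empty
  show ?case by (intro exI[of _ "{}"]) simp
next
  case (insert F \<F>)
  then obtain A where A: "finite A" "A \<subseteq> carrier M" "\<Inter>\<F> = DD A" by auto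
  have "F = UNIV \<or> (\<exists>x\<in>carrier M. F = DD {x})" using insert.prems by auto
  then show ?case
  proof
    assume "F = UNIV"
    then show ?thesis using A by (intro exI[of _ A]) simp
  next
    assume "\<exists>x\<in>carrier M. F = DD {x}"
    then obtain x where x: "x \<in> carrier M" "F = DD {x}" by blast
    then show ?thesis using A
      by (intro exI[of _ "insert x A"]) (simp add: DD_insert[of x A])
  qed
qed

lemma rel_basic:
  "(finite intersection_of (\<lambda>x. x \<in> insert UNIV ((\<lambda>x. DD {x}) ` carrier M)) relative_to C) T
   \<longleftrightarrow> (\<exists>A. finite A \<and> A \<subseteq> carrier M \<and> T = C \<inter> DD A)"
proof
  assume "(finite intersection_of (\<lambda>x. x \<in> insert UNIV ((\<lambda>x. DD {x}) ` carrier M)) relative_to C) T"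
  then obtain \<F> where F: "finite \<F>" "\<F> \<subseteq> insert UNIV ((\<lambda>x. DD {x}) ` carrier M)" "T = C \<inter> \<Inter>\<F>"
    unfolding relative_to_def intersection_of_def by auto
  then show "\<exists>A. finite A \<and> A \<subseteq> carrier M \<and> T = C \<inter> DD A"
    using Inter_DD_fin[OF F(1,2)] by auto
next
  assume "\<exists>A. finite A \<and> A \<subseteq> carrier M \<and> T = C \<inter> DD A"
  then obtain A where A: "finite A" "A \<subseteq> carrier M" "T = C \<inter> DD A" by blast
  have eq: "\<Inter>(insert UNIV ((\<lambda>x. DD {x}) ` A)) = DD A" unfolding DD_def by auto
  show "(finite intersection_of (\<lambda>x. x \<in> insert UNIV ((\<lambda>x. DD {x}) ` carrier M)) relative_to C) T"
    unfolding relative_to_def intersection_of_def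
    apply (rule exI[of _ "DD A"])
    apply (intro conjI)
     apply (rule exI[of _ "insert UNIV ((\<lambda>x. DD {x}) ` A)"])
    using A eq by auto
qed

lemma topo_eq:
  assumes C: "C \<subseteq> SMod R M"
  shows "topology (arbitrary union_of
      (finite intersection_of (\<lambda>x. x \<in> insert UNIV ((\<lambda>x. DD {x}) ` carrier M)) relative_to C))
    = subtopology (hull_kernel_topology R M) C"
proof (subst topology_eq, intro allI)
  fix W
  let ?P = "finite intersection_of (\<lambda>x. x \<in> insert UNIV ((\<lambda>x. DD {x}) ` carrier M)) relative_to C"
  have "(arbitrary union_of ?P) W \<longleftrightarrow>
    W \<subseteq> C \<and> (\<forall>N\<in>W. \<exists>G. finite G \<and> G \<subseteq> carrier M \<and> N \<in> DD G \<and> DD G \<inter> C \<subseteq> W)"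
  proof
    assume "(arbitrary union_of ?P) W"
    then obtain \<U> where U: "\<U> \<subseteq> Collect ?P" "\<Union>\<U> = W"
      unfolding union_of_def by auto
    have b: "\<And>T. T \<in> \<U> \<Longrightarrow> \<exists>A. finite A \<and> A \<subseteq> carrier M \<and> T = C \<inter> DD A"
      using U(1) rel_basic by blast
    show "W \<subseteq> C \<and> (\<forall>N\<in>W. \<exists>G. finite G \<and> G \<subseteq> carrier M \<and> N \<in> DD G \<and> DD G \<inter> C \<subseteq> W)"
    proof (intro conjI ballI)
      show "W \<subseteq> C" using U(2) b by blast
      fix N assume "N \<in> W"
      then obtain T where T: "T \<in> \<U>" "N \<in> T" using U(2) by blast
      then obtain A where A: "finite A" "A \<subseteq> carrier M" "T = C \<inter> DD A" using b by blast
      show "\<exists>G. finite G \<and> G \<subseteq> carrier M \<and> N \<in> DD G \<and> DD G \<inter> C \<subseteq> W"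
        using A T U(2) by (intro exI[of _ A]) blast
    qed
  next
    assume R: "W \<subseteq> C \<and> (\<forall>N\<in>W. \<exists>G. finite G \<and> G \<subseteq> carrier M \<and> N \<in> DD G \<and> DD G \<inter> C \<subseteq> W)"
    show "(arbitrary union_of ?P) W"
      unfolding union_of_def arbitrary_def
    proof (intro exI[of _ "{T. ?P T \<and> T \<subseteq> W}"] conjI)
      show "{T. ?P T \<and> T \<subseteq> W} \<subseteq> Collect ?P" by blast
      show "\<Union>{T. ?P T \<and> T \<subseteq> W} = W"
      proof
        show "\<Union>{T. ?P T \<and> T \<subseteq> W} \<subseteq> W" by blast
        show "W \<subseteq> \<Union>{T. ?P T \<and> T \<subseteq> W}"
        proof
          fix N assume N: "N \<in> W"
          then obtain G where G: "finite G" "G \<subseteq> carrier M" "N \<in> DD G" "DD G \<inter> C \<subseteq> W"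
            using R by blast
          have "?P (C \<inter> DD G)" using rel_basic G(1,2) by blast
          moreover have "C \<inter> DD G \<subseteq> W" "N \<in> C \<inter> DD G" using G N R by auto
          ultimately show "N \<in> \<Union>{T. ?P T \<and> T \<subseteq> W}" by blast
        qed
      qed
    qed simp
  qed
  then show "openin (topology (arbitrary union_of ?P)) W = openin (subtopology (hull_kernel_topology R M) C) W"
    using open_char[OF C, of W] by (simp add: openin_subbase)
qed

lemma closed_SMod_sub: "closed_SMod R M c \<subseteq> SMod R M"
  unfolding closed_SMod_def by auto

lemma comp_DD:
  assumes m: "module R M" and co: "closure_operation R M c" and ft: "finite_type R M c"
  shows "compactin (subtopology (hull_kernel_topology R M) (closed_SMod R M c))
           (DD G \<inter> closed_SMod R M c)"
proof -
  define X where "X = closed_SMod R M c"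
  define C where "C = DD G \<inter> X"
  define B where "B = insert UNIV ((\<lambda>x. DD {x}) ` carrier M)"
  have XS: "X \<subseteq> SMod R M" unfolding X_def by (rule closed_SMod_sub)
  have CS: "C \<subseteq> SMod R M" using XS unfolding C_def by blast
  have "compact_space (subtopology (hull_kernel_topology R M) C)"
  proof (rule Alexander_subbase_alt[where U = C and \<B> = B])
    show "C \<subseteq> \<Union>B" unfolding B_def by blast
    show "topology (arbitrary union_of (finite intersection_of (\<lambda>x. x \<in> B) relative_to C))
        = subtopology (hull_kernel_topology R M) C"
      unfolding B_def by (rule topo_eq[OF CS])
    fix \<C> assume CB: "\<C> \<subseteq> B" and cov: "C \<subseteq> \<Union>\<C>"
    show "\<exists>\<C>'. finite \<C>' \<and> \<C>' \<subseteq> \<C> \<and> C \<subseteq> \<Union>\<C>'"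
    proof (cases "UNIV \<in> \<C>")
      case True
      then show ?thesis by (intro exI[of _ "{UNIV}"]) auto
    next
      case False
      define A where "A = {x \<in> carrier M. DD {x} \<in> \<C>}"
      show ?thesis
      proof (rule ccontr)
        assume nf: "\<not> (\<exists>\<C>'. finite \<C>' \<and> \<C>' \<subseteq> \<C> \<and> C \<subseteq> \<Union>\<C>')"
        have "\<exists>N\<in>closed_SMod R M c. G \<inter> N = {} \<and> A \<subseteq> N"
        proof (rule KEY[OF m co ft])
          show "A \<subseteq> carrier M" unfolding A_def by blast
          fix A0 assume A0: "finite A0" "A0 \<subseteq> A"
          show "\<exists>N\<in>closed_SMod R M c. G \<inter> N = {} \<and> A0 \<subseteq> N"
          proof (rule ccontr)
            assume no: "\<not> (\<exists>N\<in>closed_SMod R M c. G \<inter> N = {} \<and> A0 \<subseteq> N)"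
            have "finite ((\<lambda>x. DD {x}) ` A0)" using A0(1) by simp
            moreover have "(\<lambda>x. DD {x}) ` A0 \<subseteq> \<C>" using A0(2) unfolding A_def by blast
            moreover have "C \<subseteq> \<Union>((\<lambda>x. DD {x}) ` A0)"
            proof
              fix N assume "N \<in> C"
              then have "N \<in> closed_SMod R M c" "G \<inter> N = {}" unfolding C_def X_def DD_def by auto
              then obtain x where "x \<in> A0" "x \<notin> N" using no by blast
              then show "N \<in> \<Union>((\<lambda>x. DD {x}) ` A0)" unfolding DD_def by blast
            qed
            ultimately show False using nf by blast
          qed
        qed
        then obtain N where N: "N \<in> X" "G \<inter> N = {}" "A \<subseteq> N" unfolding X_def by blast
        then have "N \<in> C" unfolding C_def DD_def by blast
        then obtain K where K: "K \<in> \<C>" "N \<in> K" using cov by blast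
        then obtain y where y: "y \<in> carrier M" "K = DD {y}" using CB False unfolding B_def by blast
        then have "y \<in> A" unfolding A_def using K by blast
        then show False using N(3) K(2) y(2) unfolding DD_def by blast
      qed
    qed
  qed
  moreover have "C \<subseteq> topspace (subtopology (hull_kernel_topology R M) X)"
    using XS unfolding C_def by (auto simp: topspace_H)
  moreover have "subtopology (subtopology (hull_kernel_topology R M) X) C
      = subtopology (hull_kernel_topology R M) C"
    by (simp add: subtopology_subtopology C_def Int_absorb1 inf_commute)
  ultimately show ?thesis unfolding C_def X_def by (simp add: compactin_subspace)
qed

lemma X_Inter:
  assumes m: "module R M" and co: "closure_operation R M c"
    and Z: "Z \<subseteq> closed_SMod R M c" "Z \<noteq> {}"
  shows "\<Inter>Z \<in> closed_SMod R M c"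
proof -
  have ZS: "Z \<subseteq> SMod R M" using Z(1) closed_SMod_sub by blast
  have IS: "\<Inter>Z \<in> SMod R M" using SMod_Inter[OF m ZS Z(2)] .
  have "c (\<Inter>Z) \<subseteq> \<Inter>Z"
  proof
    fix x assume x: "x \<in> c (\<Inter>Z)"
    show "x \<in> \<Inter>Z"
    proof
      fix N assume N: "N \<in> Z"
      then have NS: "N \<in> SMod R M" "c N = N" using Z(1) unfolding closed_SMod_def by auto
      have "c (\<Inter>Z) \<subseteq> c N" using co_3[OF co IS NS(1)] N by blast
      then show "x \<in> N" using x NS(2) by blast
    qed
  qed
  then have "c (\<Inter>Z) = \<Inter>Z" using co_2[OF co IS] by blast
  then show ?thesis using IS unfolding closed_SMod_def by simp
qed

lemma id_co: "closure_operation R M id"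
  unfolding closure_operation_def by auto

lemma id_ft: assumes m: "module R M" shows "finite_type R M id"
  unfolding finite_type_def
proof
  fix N assume N: "N \<in> SMod R M"
  show "id N = \<Union> {id L |L. L \<subseteq> N \<and> fin_gen_submodule R M L}"
  proof
    show "id N \<subseteq> \<Union> {id L |L. L \<subseteq> N \<and> fin_gen_submodule R M L}"
    proof
      fix x assume "x \<in> id N"
      then have x: "x \<in> N" by simp
      then have xc: "x \<in> carrier M" using SMod_subset[OF m N] by blast
      have "gen_submodule R M {x} \<subseteq> N" using gen_least[OF N] x by blast
      moreover have "fin_gen_submodule R M (gen_submodule R M {x})"
        unfolding fin_gen_submodule_def using xc by blast
      moreover have "x \<in> gen_submodule R M {x}" using gen_sup[of "{x}" R M] by blast
      ultimately show "x \<in> \<Union> {id L |L. L \<subseteq> N \<and> fin_gen_submodule R M L}" by auto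
    qed
    show "\<Union> {id L |L. L \<subseteq> N \<and> fin_gen_submodule R M L} \<subseteq> id N" by auto
  qed
qed

lemma closed_SMod_id: "closed_SMod R M id = SMod R M"
  unfolding closed_SMod_def by simp

lemma comp_id:
  assumes m: "module R M"
  shows "compactin (hull_kernel_topology R M) (DD G \<inter> SMod R M)"
proof -
  have "compactin (subtopology (hull_kernel_topology R M) (closed_SMod R M id))
           (DD G \<inter> closed_SMod R M id)"
    by (rule comp_DD[OF m id_co id_ft[OF m]])
  then show ?thesis unfolding closed_SMod_id
    by (metis subtopology_topspace topspace_H)
qed

lemma irr_fin:
  assumes irr: "irreducible_in Y Z"
  shows "finite \<K> \<Longrightarrow> (\<forall>K\<in>\<K>. closedin Y K) \<Longrightarrow> Z \<subseteq> \<Union>\<K> \<Longrightarrow> \<exists>K\<in>\<K>. Z \<subseteq> K"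
proof (induction \<K> rule: finite_induct)
  case empty
  then show ?case using irr unfolding irreducible_in_def by auto
next
  case (insert K \<K>)
  have c1: "closedin Y K" using insert.prems by simp
  have c2: "closedin Y (\<Union>\<K>)" using insert.prems insert.hyps(1) by (intro closedin_Union) auto
  have "Z \<subseteq> K \<union> \<Union>\<K>" using insert.prems by auto
  then have "Z \<subseteq> K \<or> Z \<subseteq> \<Union>\<K>" using irr c1 c2 unfolding irreducible_in_def by blast
  then show ?case
  proof
    assume "Z \<subseteq> \<Union>\<K>"
    then show ?thesis using insert.IH insert.prems by auto
  qed auto
qed

lemma fin_decomp:
  assumes XS: "X \<subseteq> SMod R M"
    and cpt: "\<And>G. compactin (subtopology (hull_kernel_topology R M) X) (DD G \<inter> X)"
    and U: "openin (subtopology (hull_kernel_topology R M) X) U"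
      "compactin (subtopology (hull_kernel_topology R M) X) U"
  shows "\<exists>\<G>. finite \<G> \<and> U = \<Union>((\<lambda>G. DD G \<inter> X) ` \<G>)"
proof -
  let ?Y = "subtopology (hull_kernel_topology R M) X"
  define \<GG> where "\<GG> = {G. finite G \<and> G \<subseteq> carrier M \<and> DD G \<inter> X \<subseteq> U}"
  have op: "\<forall>B\<in>(\<lambda>G. DD G \<inter> X) ` \<GG>. openin ?Y B"
  proof
    fix B assume "B \<in> (\<lambda>G. DD G \<inter> X) ` \<GG>"
    then obtain G where G: "G \<in> \<GG>" "B = DD G \<inter> X" by blast
    show "openin ?Y B" unfolding open_char[OF XS] G(2) using G(1) unfolding \<GG>_def by blast
  qed
  have cov: "U \<subseteq> \<Union>((\<lambda>G. DD G \<inter> X) ` \<GG>)"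
  proof
    fix N assume N: "N \<in> U"
    then obtain G where "finite G" "G \<subseteq> carrier M" "N \<in> DD G" "DD G \<inter> X \<subseteq> U"
      using U(1) unfolding open_char[OF XS] by blast
    moreover have "N \<in> X" using N U(1) unfolding open_char[OF XS] by blast
    ultimately show "N \<in> \<Union>((\<lambda>G. DD G \<inter> X) ` \<GG>)" unfolding \<GG>_def by blast
  qed
  obtain \<F> where F: "finite \<F>" "\<F> \<subseteq> (\<lambda>G. DD G \<inter> X) ` \<GG>" "U \<subseteq> \<Union>\<F>"
    using U(2) op cov unfolding compactin_def by metis
  obtain \<G> where G: "\<G> \<subseteq> \<GG>" "finite \<G>" "\<F> = (\<lambda>G. DD G \<inter> X) ` \<G>"
    using finite_subset_image[OF F(1,2)] by blast
  have "\<Union>((\<lambda>G. DD G \<inter> X) ` \<G>) \<subseteq> U" using G(1) unfolding \<GG>_def by blast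
  then show ?thesis using F(3) G by (intro exI[of _ \<G>]) blast
qed

lemma spectral_part:
  assumes m: "module R M"
    and co: "closure_operation R M c"
    and ft: "finite_type R M c"
  shows "spectral_space (subtopology (hull_kernel_topology R M) (closed_SMod R M c))"
proof -
  define H where "H = hull_kernel_topology R M"
  define X where "X = closed_SMod R M c"
  define Y where "Y = subtopology H X"
  have XS: "X \<subseteq> SMod R M" unfolding X_def by (rule closed_SMod_sub)
  have topY: "topspace Y = X" unfolding Y_def H_def using XS by (auto simp: topspace_H)
  have ochar: "\<And>W. openin Y W \<longleftrightarrow>
      W \<subseteq> X \<and> (\<forall>N\<in>W. \<exists>G. finite G \<and> G \<subseteq> carrier M \<and> N \<in> DD G \<and> DD G \<inter> X \<subseteq> W)"
    unfolding Y_def H_def by (rule open_char[OF XS])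
  have cpt: "\<And>G. compactin Y (DD G \<inter> X)"
    unfolding Y_def H_def X_def by (rule comp_DD[OF m co ft])
  have DDo: "\<And>G. finite G \<Longrightarrow> G \<subseteq> carrier M \<Longrightarrow> openin Y (DD G \<inter> X)"
    unfolding ochar by blast
  have Xsub: "\<And>N. N \<in> X \<Longrightarrow> N \<subseteq> carrier M" using XS SMod_subset[OF m] by blast
  show ?thesis
    unfolding Y_def[unfolded H_def X_def, symmetric] spectral_space_def
  proof (intro conjI allI impI)
    show "compact_space Y" unfolding compact_space_def topY using cpt[of "{}"] by simp
    show "t0_space Y" unfolding t0_space_def topY
    proof (intro ballI impI)
      fix N N' assume N: "N \<in> X" "N' \<in> X" "N \<noteq> N'"
      then obtain x where x: "(x \<in> N \<and> x \<notin> N') \<or> (x \<in> N' \<and> x \<notin> N)" by blast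
      then have xc: "x \<in> carrier M" using Xsub N by blast
      have o: "openin Y (DD {x} \<inter> X)" using DDo[of "{x}"] xc by simp
      from x show "\<exists>U. openin Y U \<and> (N \<notin> U \<longleftrightarrow> N' \<in> U)"
      proof (elim disjE conjE)
        assume "x \<in> N" "x \<notin> N'"
        then have "N \<notin> DD {x} \<inter> X" "N' \<in> DD {x} \<inter> X" using N by (simp_all add: DD_def)
        then show ?thesis using o by blast
      next
        assume "x \<in> N'" "x \<notin> N"
        then have "N \<in> DD {x} \<inter> X" "N' \<notin> DD {x} \<inter> X" using N by (simp_all add: DD_def)
        then show ?thesis using o by blast
      qed
    qed
    fix U V assume UV: "openin Y U \<and> compactin Y U \<and> openin Y V \<and> compactin Y V"
    obtain \<G>1 where G1: "finite \<G>1" "U = \<Union>((\<lambda>G. DD G \<inter> X) ` \<G>1)"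
      using fin_decomp[OF XS cpt[unfolded Y_def H_def]] UV unfolding Y_def H_def by blast
    obtain \<G>2 where G2: "finite \<G>2" "V = \<Union>((\<lambda>G. DD G \<inter> X) ` \<G>2)"
      using fin_decomp[OF XS cpt[unfolded Y_def H_def]] UV unfolding Y_def H_def by blast
    have eq: "U \<inter> V = \<Union>((\<lambda>p. DD (fst p \<union> snd p) \<inter> X) ` (\<G>1 \<times> \<G>2))"
    proof
      show "U \<inter> V \<subseteq> \<Union>((\<lambda>p. DD (fst p \<union> snd p) \<inter> X) ` (\<G>1 \<times> \<G>2))"
      proof
        fix N assume "N \<in> U \<inter> V"
        then obtain A B where AB: "A \<in> \<G>1" "N \<in> DD A \<inter> X" "B \<in> \<G>2" "N \<in> DD B \<inter> X"
          unfolding G1(2) G2(2) by blast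
        then have "N \<in> DD (fst (A, B) \<union> snd (A, B)) \<inter> X" by (simp add: DD_Un)
        moreover have "(A, B) \<in> \<G>1 \<times> \<G>2" using AB by simp
        ultimately show "N \<in> \<Union>((\<lambda>p. DD (fst p \<union> snd p) \<inter> X) ` (\<G>1 \<times> \<G>2))" by blast
      qed
      show "\<Union>((\<lambda>p. DD (fst p \<union> snd p) \<inter> X) ` (\<G>1 \<times> \<G>2)) \<subseteq> U \<inter> V"
      proof
        fix N assume "N \<in> \<Union>((\<lambda>p. DD (fst p \<union> snd p) \<inter> X) ` (\<G>1 \<times> \<G>2))"
        then obtain A B where AB: "A \<in> \<G>1" "B \<in> \<G>2" "N \<in> DD (A \<union> B) \<inter> X" by auto
        then have "N \<in> DD A \<inter> X" "N \<in> DD B \<inter> X" by (auto simp: DD_Un)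
        then show "N \<in> U \<inter> V" unfolding G1(2) G2(2) using AB by blast
      qed
    qed
    show "compactin Y (U \<inter> V)" unfolding eq
      using G1(1) G2(1) cpt by (intro compactin_Union) auto
  next
    fix W N assume WN: "openin Y W \<and> N \<in> W"
    then obtain G where G: "finite G" "G \<subseteq> carrier M" "N \<in> DD G" "DD G \<inter> X \<subseteq> W"
      unfolding ochar by blast
    have "N \<in> X" using WN unfolding ochar by blast
    then show "\<exists>U. openin Y U \<and> compactin Y U \<and> N \<in> U \<and> U \<subseteq> W"
      using G DDo cpt by (intro exI[of _ "DD G \<inter> X"]) auto
  next
    fix Z assume Z: "closedin Y Z \<and> irreducible_in Y Z"
    have ZX: "Z \<subseteq> X" "Z \<noteq> {}" using Z unfolding irreducible_in_def topY by auto
    define N0 where "N0 = \<Inter>Z"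
    have N0X: "N0 \<in> X" unfolding N0_def X_def using X_Inter[OF m co] ZX unfolding X_def by blast
    have oc: "openin Y (X - Z)" using Z unfolding closedin_def topY by blast
    have N0Z: "N0 \<in> Z"
    proof (rule ccontr)
      assume "N0 \<notin> Z"
      then have "N0 \<in> X - Z" using N0X by blast
      then obtain G where G: "finite G" "G \<subseteq> carrier M" "N0 \<in> DD G" "DD G \<inter> X \<subseteq> X - Z"
        using oc unfolding ochar by blast
      have cl: "\<forall>K\<in>(\<lambda>g. {N \<in> X. g \<in> N}) ` G. closedin Y K"
      proof
        fix K assume "K \<in> (\<lambda>g. {N \<in> X. g \<in> N}) ` G"
        then obtain g where g: "g \<in> G" "K = {N \<in> X. g \<in> N}" by blast
        have e: "topspace Y - K = DD {g} \<inter> X" unfolding topY g(2) DD_def by blast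
        have o: "openin Y (DD {g} \<inter> X)" using DDo[of "{g}"] g(1) G(2) by blast
        have s: "K \<subseteq> topspace Y" unfolding topY g(2) by blast
        show "closedin Y K" unfolding closedin_def using e o s by simp
      qed
      have "Z \<subseteq> \<Union>((\<lambda>g. {N \<in> X. g \<in> N}) ` G)"
      proof
        fix N assume N: "N \<in> Z"
        have NX: "N \<in> X" using N ZX(1) by blast
        then have "N \<notin> DD G" using G(4) N by blast
        then obtain g where "g \<in> G" "g \<in> N" unfolding DD_def by blast
        then show "N \<in> \<Union>((\<lambda>g. {N \<in> X. g \<in> N}) ` G)" using NX by blast
      qed
      then obtain K where K: "K \<in> (\<lambda>g. {N \<in> X. g \<in> N}) ` G" "Z \<subseteq> K"
        using irr_fin[of Y Z, OF _ finite_imageI[OF G(1)] cl] Z by blast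
      then obtain g where g: "g \<in> G" "Z \<subseteq> {N \<in> X. g \<in> N}" by blast
      then have "g \<in> N0" unfolding N0_def by blast
      then show False using G(3) g(1) unfolding DD_def by blast
    qed
    have "Z = Y closure_of {N0}"
    proof
      show "Z \<subseteq> Y closure_of {N0}"
      proof
        fix N assume N: "N \<in> Z"
        have "\<forall>T. N \<in> T \<and> openin Y T \<longrightarrow> (\<exists>y\<in>{N0}. y \<in> T)"
        proof (intro allI impI)
          fix T assume T: "N \<in> T \<and> openin Y T"
          then obtain G where G: "N \<in> DD G" "DD G \<inter> X \<subseteq> T" unfolding ochar by blast
          have "N0 \<subseteq> N" unfolding N0_def using N by blast
          then have "N0 \<in> DD G" using G(1) unfolding DD_def by blast
          then show "\<exists>y\<in>{N0}. y \<in> T" using G(2) N0X by blast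
        qed
        then show "N \<in> Y closure_of {N0}" unfolding closure_of_def topY using N ZX(1) by blast
      qed
      show "Y closure_of {N0} \<subseteq> Z"
      proof
        fix N assume N: "N \<in> Y closure_of {N0}"
        show "N \<in> Z"
        proof (rule ccontr)
          assume "N \<notin> Z"
          moreover have "N \<in> X" using N unfolding closure_of_def topY by blast
          ultimately have "N0 \<in> X - Z" using N oc unfolding closure_of_def by blast
          then show False using N0Z by blast
        qed
      qed
    qed
    then show "\<exists>x\<in>Z. Z = Y closure_of {x}" using N0Z by blast
  qed
qed

lemma closed_part:
  assumes m: "module R M"
    and co: "closure_operation R M c"
    and ft: "finite_type R M c"
  shows "closedin (constructible_topology (hull_kernel_topology R M)) (closed_SMod R M c)"
proof -
  define H where "H = hull_kernel_topology R M"
  define S where "S = SMod R M"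
  define X where "X = closed_SMod R M c"
  define \<A> where "\<A> = {U. openin H U \<and> compactin H U} \<union> {topspace H - U | U. openin H U \<and> compactin H U}"
  have tH: "topspace H = S" unfolding H_def S_def by (rule topspace_H)
  have KA: "constructible_topology H = topology_generated_by \<A>"
    unfolding constructible_topology_def \<A>_def ..
  have tK: "topspace (constructible_topology H) = S"
  proof -
    have "\<Union>\<A> \<subseteq> S" unfolding \<A>_def using tH openin_subset by auto
    moreover have "S \<in> \<A>" unfolding \<A>_def using tH
      by (intro UnI2 CollectI exI[of _ "{}"]) auto
    ultimately show ?thesis unfolding KA topology_generated_by_topspace by blast
  qed
  have XS: "X \<subseteq> S" unfolding X_def S_def by (rule closed_SMod_sub)
  have "openin (constructible_topology H) (S - X)"
  proof (subst openin_subopen, intro ballI)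
    fix N assume N: "N \<in> S - X"
    then have NS: "N \<in> SMod R M" "N \<noteq> c N" unfolding S_def X_def closed_SMod_def by auto
    then obtain z where z: "z \<in> c N" "z \<notin> N" using co_2[OF co NS(1)] by blast
    have zc: "z \<in> carrier M" using z(1) SMod_subset[OF m co_1[OF co NS(1)]] by blast
    have "z \<in> \<Union> {c L | L. L \<subseteq> N \<and> fin_gen_submodule R M L}" using z(1) ft_1[OF ft NS(1)] by simp
    then obtain L where L: "z \<in> c L" "L \<subseteq> N" "fin_gen_submodule R M L" by blast
    then obtain E where E: "finite E" "E \<subseteq> carrier M" "L = gen_submodule R M E"
      unfolding fin_gen_submodule_def by blast
    have EN: "E \<subseteq> N" using gen_sup[of E R M] E(3) L(2) by blast
    define O1 where "O1 = S - V_sub R M E"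
    have O1o: "openin H O1" unfolding O1_def H_def S_def hull_kernel_topology_def
      using E(1,2) by (intro topology_generated_by_Basis) blast
    have "O1 = {N \<in> S. \<exists>x\<in>E. x \<notin> N}" unfolding O1_def V_sub_def S_def by blast
    also have "\<dots> = \<Union>((\<lambda>x. DD {x} \<inter> S) ` E)" unfolding DD_def by blast
    finally have O1eq: "O1 = \<Union>((\<lambda>x. DD {x} \<inter> S) ` E)" .
    have O1c: "compactin H O1" unfolding O1eq H_def S_def
      using E(1) comp_id[OF m] by (intro compactin_Union) auto
    have T1: "topspace H - O1 \<in> \<A>" unfolding \<A>_def using O1o O1c by blast
    have T2o: "openin H (DD {z} \<inter> S)" unfolding H_def S_def using DD_open[of "{z}" M R] zc by simp
    have T2: "DD {z} \<inter> S \<in> \<A>" unfolding \<A>_def using T2o comp_id[OF m, of "{z}"]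
      unfolding H_def S_def by blast
    have To: "openin (constructible_topology H) ((topspace H - O1) \<inter> (DD {z} \<inter> S))"
      unfolding KA using T1 T2 by (intro openin_Int topology_generated_by_Basis)
    have NT: "N \<in> (topspace H - O1) \<inter> (DD {z} \<inter> S)"
      using NS(1) EN z(2) unfolding tH O1_def V_sub_def DD_def S_def by auto
    have TX: "(topspace H - O1) \<inter> (DD {z} \<inter> S) \<subseteq> S - X"
    proof
      fix N' assume N': "N' \<in> (topspace H - O1) \<inter> (DD {z} \<inter> S)"
      then have N'S: "N' \<in> SMod R M" "E \<subseteq> N'" "z \<notin> N'"
        unfolding tH O1_def V_sub_def DD_def S_def by auto
      show "N' \<in> S - X"
      proof
        show "N' \<in> S" using N'S unfolding S_def by simp
        show "N' \<notin> X"
        proof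
          assume "N' \<in> X"
          then have cN': "c N' = N'" unfolding X_def closed_SMod_def by simp
          have "L \<subseteq> N'" using gen_least[OF N'S(1,2)] E(3) by simp
          moreover have "L \<in> SMod R M" using gen_SMod[OF m E(2)] E(3) by simp
          ultimately have "c L \<subseteq> N'" using co_3[OF co _ N'S(1)] cN' by metis
          then show False using L(1) N'S(3) by blast
        qed
      qed
    qed
    show "\<exists>T. openin (constructible_topology H) T \<and> N \<in> T \<and> T \<subseteq> S - X"
      using To NT TX by blast
  qed
  then show ?thesis
    unfolding H_def[symmetric] X_def[symmetric] closedin_def tK using XS by blast
qed

theorem proposition3p4:
  assumes "module R M"
    and "closure_operation R M c"
    and "finite_type R M c"
  shows "spectral_space (subtopology (hull_kernel_topology R M) (closed_SMod R M c)) \<and>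
         closedin (constructible_topology (hull_kernel_topology R M)) (closed_SMod R M c)"
  using spectral_part[OF assms] closed_part[OF assms] by blast

end
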